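(* Let $G$ be a $(P_6,C_4)$-free graph and let $X$, $Y$, $\{c\}$ be pairwise disjoint subsets of $V(G)$ such that: $Y$ is a clique and every vertex of $X$ has a neighbor in $Y$; $c$ is complete to $X$ and anticomplete to $Y$; and either $G[X]$ is not connected, or there exist vertices $c',c''\in V(G)\setminus(X\cup Y)$ such that $c'$ is complete to $Y$ and anticomplete to $X$, $c''$ is anticomplete to $X\cup Y$, and $c'c''\in E(G)$. Then $G[X]$ is $(P_4,2P_3)$-free.
   Context: $2P_3$ is the disjoint union of two paths on three vertices. Complete/anticomplete: all edges / no edges between the two sets. *)

theory Defs
  imports Main
begin

definition graph :: "'a set \<Rightarrow> ('a \<Rightarrow> 'a \<Rightarrow> bool) \<Rightarrow> bool" where
  "graph V E \<longleftrightarrow> finite V \<and> (\<forall>x y. E x y \<longrightarrow> x \<in> V \<and> y \<in> V)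
     \<and> (\<forall>x y. E x y \<longrightarrow> E y x) \<and> (\<forall>x. \<not> E x x)"

definition has_induced :: "'a set \<Rightarrow> ('a \<Rightarrow> 'a \<Rightarrow> bool) \<Rightarrow> nat \<Rightarrow> (nat \<Rightarrow> nat \<Rightarrow> bool) \<Rightarrow> bool" where
  "has_induced S E k A \<longleftrightarrow> (\<exists>f. inj_on f {0..<k} \<and> f ` {0..<k} \<subseteq> S \<and>
      (\<forall>i<k. \<forall>j<k. E (f i) (f j) \<longleftrightarrow> A i j))"

definition path_adj :: "nat \<Rightarrow> nat \<Rightarrow> bool" where
  "path_adj i j \<longleftrightarrow> i + 1 = j \<or> j + 1 = i"

definition c4_adj :: "nat \<Rightarrow> nat \<Rightarrow> bool" where
  "c4_adj i j \<longleftrightarrow> (i + 1) mod 4 = j \<or> (j + 1) mod 4 = i"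

definition twoP3_adj :: "nat \<Rightarrow> nat \<Rightarrow> bool" where
  "twoP3_adj i j \<longleftrightarrow> {i, j} = {0, 1} \<or> {i, j} = {1, 2} \<or> {i, j} = {3, 4} \<or> {i, j} = {4, 5}"


definition complete_to :: "('a \<Rightarrow> 'a \<Rightarrow> bool) \<Rightarrow> 'a set \<Rightarrow> 'a set \<Rightarrow> bool" where
  "complete_to E A B \<longleftrightarrow> (\<forall>a\<in>A. \<forall>b\<in>B. E a b)"

definition anticomplete_to :: "('a \<Rightarrow> 'a \<Rightarrow> bool) \<Rightarrow> 'a set \<Rightarrow> 'a set \<Rightarrow> bool" where
  "anticomplete_to E A B \<longleftrightarrow> (\<forall>a\<in>A. \<forall>b\<in>B. \<not> E a b)"

definition clique :: "('a \<Rightarrow> 'a \<Rightarrow> bool) \<Rightarrow> 'a set \<Rightarrow> bool" where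
  "clique E S \<longleftrightarrow> (\<forall>x\<in>S. \<forall>y\<in>S. x \<noteq> y \<longrightarrow> E x y)"

definition connected_induced :: "('a \<Rightarrow> 'a \<Rightarrow> bool) \<Rightarrow> 'a set \<Rightarrow> bool" where
  "connected_induced E S \<longleftrightarrow> S \<noteq> {} \<and>
     (\<forall>x\<in>S. \<forall>y\<in>S. (\<lambda>u v. u \<in> S \<and> v \<in> S \<and> E u v)\<^sup>*\<^sup>* x y)"

end

theory Submission
  imports Defs
begin

lemma all6: "(\<forall>i<(6::nat). P i) = (P 0 \<and> P 1 \<and> P 2 \<and> P 3 \<and> P 4 \<and> P 5)"
proof -
  have e: "(6::nat) = Suc (Suc (Suc (Suc (Suc (Suc 0)))))" by simp
  show ?thesis unfolding e All_less_Suc2 by (simp add: eval_nat_numeral)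
qed

lemma all4: "(\<forall>i<(4::nat). P i) = (P 0 \<and> P 1 \<and> P 2 \<and> P 3)"
proof -
  have e: "(4::nat) = Suc (Suc (Suc (Suc 0)))" by simp
  show ?thesis unfolding e All_less_Suc2 by (simp add: eval_nat_numeral)
qed

lemma inj_iff: "inj_on f {0..<(n::nat)} \<longleftrightarrow> (\<forall>i<n. \<forall>j<n. f i = f j \<longrightarrow> i = j)"
  by (auto simp: inj_on_def)

lemma mk_p6:
  assumes Es: "\<And>u v. E u v = E v u" and irr: "\<And>u. \<not> E u u"
    and "{a,b,c,d,e,g} \<subseteq> V"
    and "E a b" "E b c" "E c d" "E d e" "E e g"
    and "\<not>E a c" "\<not>E a d" "\<not>E a e" "\<not>E a g" "\<not>E b d" "\<not>E b e" "\<not>E b g"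
        "\<not>E c e" "\<not>E c g" "\<not>E d g"
  shows "has_induced V E 6 path_adj"
proof -
  define f where "f = (\<lambda>i. [a,b,c,d,e,g] ! i)"
  have d: "distinct [a,b,c,d,e,g]"
    using assms(4-) irr by (simp, safe, simp_all add: Es)
  have "inj_on f {0..<6}"
    unfolding inj_iff all6 f_def using d by auto
  moreover have "f ` {0..<6} \<subseteq> V"
    using assms(3) unfolding f_def by (auto simp: eval_nat_numeral less_Suc_eq)
  moreover have "\<forall>i<6. \<forall>j<6. E (f i) (f j) \<longleftrightarrow> path_adj i j"
    unfolding all6 using assms(4-) irr by (simp add: f_def path_adj_def Es)
  ultimately show ?thesis unfolding has_induced_def by blast
qed

lemma mk_c4:
  assumes Es: "\<And>u v. E u v = E v u" and irr: "\<And>u. \<not> E u u"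
    and "{a,b,c,d} \<subseteq> V" "a \<noteq> c" "b \<noteq> d"
    and "E a b" "E b c" "E c d" "E d a" "\<not>E a c" "\<not>E b d"
  shows "has_induced V E 4 c4_adj"
proof -
  define f where "f = (\<lambda>i. [a,b,c,d] ! i)"
  have d: "distinct [a,b,c,d]"
    using assms(4-) irr by (simp, safe, simp_all add: Es)
  have "inj_on f {0..<4}"
    unfolding inj_iff all4 f_def using d by auto
  moreover have "f ` {0..<4} \<subseteq> V"
    using assms(3) unfolding f_def by (auto simp: eval_nat_numeral less_Suc_eq)
  moreover have "\<forall>i<4. \<forall>j<4. E (f i) (f j) \<longleftrightarrow> c4_adj i j"
    unfolding all4 using assms(4-) irr by (simp add: f_def c4_adj_def Es)
  ultimately show ?thesis unfolding has_induced_def by blast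
qed

lemma get_p4:
  assumes "has_induced X E 4 path_adj"
  obtains a b c d where "{a,b,c,d} \<subseteq> X" "E a b" "E b c" "E c d"
    "\<not>E a c" "\<not>E a d" "\<not>E b d"
proof -
  obtain f where f: "f ` {0..<4} \<subseteq> X" "\<forall>i<4. \<forall>j<4. E (f i) (f j) \<longleftrightarrow> path_adj i j"
    using assms unfolding has_induced_def by blast
  have "{f 0, f 1, f 2, f 3} \<subseteq> X" using f(1) by auto
  moreover have "E (f 0) (f 1)" "E (f 1) (f 2)" "E (f 2) (f 3)"
    "\<not>E (f 0) (f 2)" "\<not>E (f 0) (f 3)" "\<not>E (f 1) (f 3)"
    using f(2) unfolding all4 by (simp_all add: path_adj_def)
  ultimately show ?thesis using that by blast
qed

lemma get_2p3:
  assumes "has_induced X E 6 twoP3_adj"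
  obtains p1 p2 p3 q1 q2 q3 where "{p1,p2,p3,q1,q2,q3} \<subseteq> X"
    "E p1 p2" "E p2 p3" "\<not>E p1 p3" "E q1 q2" "E q2 q3" "\<not>E q1 q3"
    "\<forall>p\<in>{p1,p2,p3}. \<forall>q\<in>{q1,q2,q3}. \<not> E p q" "p1 \<noteq> p3" "q1 \<noteq> q3"
proof -
  obtain f where f: "f ` {0..<6} \<subseteq> X" "\<forall>i<6. \<forall>j<6. E (f i) (f j) \<longleftrightarrow> twoP3_adj i j"
    "inj_on f {0..<6}"
    using assms unfolding has_induced_def by blast
  have i02: "f 0 \<noteq> f 2" using inj_onD[OF f(3), of 0 2] by force
  have i35: "f 3 \<noteq> f 5" using inj_onD[OF f(3), of 3 5] by force
  have "{f 0, f 1, f 2, f 3, f 4, f 5} \<subseteq> X" using f(1) by auto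
  have h: "\<And>i j. i<6 \<Longrightarrow> j<6 \<Longrightarrow> E (f i) (f j) = twoP3_adj i j" using f(2) by blast
  have "E (f 0) (f 1)" using h[of 0 1] by (simp add: twoP3_adj_def)
  moreover have "E (f 1) (f 2)" using h[of 1 2] by (simp add: twoP3_adj_def)
  moreover have "\<not>E (f 0) (f 2)" using h[of 0 2] by (simp add: twoP3_adj_def doubleton_eq_iff)
  moreover have "E (f 3) (f 4)" using h[of 3 4] by (simp add: twoP3_adj_def)
  moreover have "E (f 4) (f 5)" using h[of 4 5] by (simp add: twoP3_adj_def)
  moreover have "\<not>E (f 3) (f 5)" using h[of 3 5] by (simp add: twoP3_adj_def doubleton_eq_iff)
  moreover have "\<forall>p\<in>{f 0, f 1, f 2}. \<forall>q\<in>{f 3, f 4, f 5}. \<not> E p q"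
    using h[of 0 3] h[of 0 4] h[of 0 5] h[of 1 3] h[of 1 4] h[of 1 5] h[of 2 3] h[of 2 4] h[of 2 5]
    by (simp add: twoP3_adj_def doubleton_eq_iff)
  moreover note \<open>{f 0, f 1, f 2, f 3, f 4, f 5} \<subseteq> X\<close>
  ultimately show ?thesis using i02 i35 by (intro that[of "f 0" "f 1" "f 2" "f 3" "f 4" "f 5"])
qed

lemma rt_sym:
  assumes sym: "\<And>u v. R u v \<Longrightarrow> R v u" and "R\<^sup>*\<^sup>* u v" shows "R\<^sup>*\<^sup>* v u"
  using assms(2) by (induction rule: rtranclp_induct)
    (auto intro: converse_rtranclp_into_rtranclp sym)

theorem lemma2p4:
  fixes V :: "'a set" and E :: "'a \<Rightarrow> 'a \<Rightarrow> bool" and X Y :: "'a set" and c :: 'a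
  assumes "graph V E"
    and "\<not> has_induced V E 6 path_adj"
    and "\<not> has_induced V E 4 c4_adj"
    and "X \<subseteq> V" and "Y \<subseteq> V" and "c \<in> V"
    and "X \<inter> Y = {}" and "c \<notin> X" and "c \<notin> Y"
    and "clique E Y"
    and "\<forall>x\<in>X. \<exists>y\<in>Y. E x y"
    and "complete_to E {c} X" and "anticomplete_to E {c} Y"
    and "\<not> connected_induced E X \<or>
         (\<exists>c' c''. c' \<in> V - (X \<union> Y) \<and> c'' \<in> V - (X \<union> Y) \<and>
            complete_to E {c'} Y \<and> anticomplete_to E {c'} X \<and>
            anticomplete_to E {c''} (X \<union> Y) \<and> E c' c'')"
  shows "\<not> has_induced X E 4 path_adj \<and> \<not> has_induced X E 6 twoP3_adj"
proof -
  have Es: "\<And>u v. E u v = E v u" using assms(1) unfolding graph_def by blast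
  have irr: "\<And>u. \<not> E u u" using assms(1) unfolding graph_def by blast
  have XV: "\<And>x. x \<in> X \<Longrightarrow> x \<in> V" and YV: "\<And>y. y \<in> Y \<Longrightarrow> y \<in> V"
    using assms(4,5) by auto
  have disj: "\<And>x. x \<in> X \<Longrightarrow> x \<notin> Y" using assms(7) by auto
  have cX: "\<And>x. x \<in> X \<Longrightarrow> E c x" using assms(12) unfolding complete_to_def by auto
  have cY: "\<And>y. y \<in> Y \<Longrightarrow> \<not> E c y" using assms(13) unfolding anticomplete_to_def by auto
  have cl: "\<And>y y'. y \<in> Y \<Longrightarrow> y' \<in> Y \<Longrightarrow> y \<noteq> y' \<Longrightarrow> E y y'"
    using assms(10) unfolding clique_def by auto
  have NC: "\<not> E x' y" if "x \<in> X" "x' \<in> X" "y \<in> Y" "x \<noteq> x'" "\<not> E x x'" "E x y" for x x' y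
  proof
    assume "E x' y"
    have "has_induced V E 4 c4_adj"
    proof (rule mk_c4[OF Es irr])
      show "{x, c, x', y} \<subseteq> V" using that XV YV assms(6) by auto
      show "x \<noteq> x'" by fact
      show "c \<noteq> y" using that assms(9) by auto
      show "E x c" using cX[OF that(1)] Es[of x c] by simp
      show "E c x'" using cX[OF that(2)] .
      show "E x' y" by fact
      show "E y x" using that(6) Es[of x y] by simp
      show "\<not> E x x'" by fact
      show "\<not> E c y" using cY[OF that(3)] .
    qed
    then show False using assms(3) by blast
  qed
  show ?thesis
  proof
    show "\<not> has_induced X E 4 path_adj"
    proof
      assume "has_induced X E 4 path_adj"
      then obtain x1 x2 x3 x4 where xs: "{x1,x2,x3,x4} \<subseteq> X" "E x1 x2" "E x2 x3" "E x3 x4"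
        "\<not>E x1 x3" "\<not>E x1 x4" "\<not>E x2 x4" by (rule get_p4)
      have X1: "x1 \<in> X" "x2 \<in> X" "x3 \<in> X" "x4 \<in> X" using xs(1) by auto
      have d13: "x1 \<noteq> x3" using xs(4,6) by auto
      have d14: "x1 \<noteq> x4" using xs(4,5) Es by metis
      have d24: "x2 \<noteq> x4" using xs(2,6) by metis
      obtain y1 where y1: "y1 \<in> Y" "E x1 y1" using assms(11) X1(1) by blast
      have n3: "\<not> E x3 y1" using NC[OF X1(1) X1(3) y1(1) d13 xs(5) y1(2)] .
      have n4: "\<not> E x4 y1" using NC[OF X1(1) X1(4) y1(1) d14 xs(6) y1(2)] .
      have tail: False if ab: "a \<in> V" "b \<in> V" "E a b" "E b y1" "\<not> E a y1"
        "\<forall>x\<in>{x1,x2,x3,x4}. \<not> E a x \<and> \<not> E b x" for a b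
      proof (cases "E x2 y1")
        case True
        have "has_induced V E 6 path_adj"
          apply (rule mk_p6[OF Es irr, where a="a" and b="b" and c="y1" and d="x2" and e="x3" and g="x4"])
          using ab xs X1 XV YV y1 n3 n4 True by (simp_all add: Es)
        then show False using assms(2) by blast
      next
        case False
        have "has_induced V E 6 path_adj"
          apply (rule mk_p6[OF Es irr, where a="a" and b="b" and c="y1" and d="x1" and e="x2" and g="x3"])
          using ab xs X1 XV YV y1 n3 n4 False by (simp_all add: Es)
        then show False using assms(2) by blast
      qed
      from assms(14) show False
      proof
        assume nc: "\<not> connected_induced E X"
        define R where "R = (\<lambda>u v. u \<in> X \<and> v \<in> X \<and> E u v)"
        have Rs: "\<And>u v. R u v \<Longrightarrow> R v u" unfolding R_def using Es by simp
        obtain u v where uv: "u \<in> X" "v \<in> X" "\<not> R\<^sup>*\<^sup>* u v"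
          using nc X1(1) unfolding connected_induced_def R_def by blast
        have "\<exists>z\<in>X. \<not> R\<^sup>*\<^sup>* x1 z"
        proof (rule ccontr)
          assume "\<not> ?thesis"
          then have h1: "R\<^sup>*\<^sup>* x1 u" and h2: "R\<^sup>*\<^sup>* x1 v" using uv by auto
          have "R\<^sup>*\<^sup>* u x1" by (rule rt_sym[OF Rs h1])
          then have "R\<^sup>*\<^sup>* u v" using h2 by (rule rtranclp_trans)
          then show False using uv by blast
        qed
        then obtain z where z: "z \<in> X" "\<not> R\<^sup>*\<^sup>* x1 z" by blast
        have "R x1 x2" unfolding R_def using X1 xs(2) by simp
        then have r2: "R\<^sup>*\<^sup>* x1 x2" by (rule r_into_rtranclp)
        have "R x2 x3" unfolding R_def using X1 xs(3) by simp
        with r2 have r3: "R\<^sup>*\<^sup>* x1 x3" by (rule rtranclp.rtrancl_into_rtrancl)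
        have "R x3 x4" unfolding R_def using X1 xs(4) by simp
        with r3 have r4: "R\<^sup>*\<^sup>* x1 x4" by (rule rtranclp.rtrancl_into_rtrancl)
        have zx: "z \<noteq> x \<and> \<not> E z x" if xx: "x \<in> X" "R\<^sup>*\<^sup>* x1 x" for x
        proof
          show "z \<noteq> x" using xx(2) z(2) by blast
          show "\<not> E z x"
          proof
            assume "E z x"
            then have "R x z" unfolding R_def using z(1) xx(1) Es[of z x] by simp
            with xx(2) have "R\<^sup>*\<^sup>* x1 z" by (rule rtranclp.rtrancl_into_rtrancl)
            then show False using z(2) by blast
          qed
        qed
        have z1: "z \<noteq> x1 \<and> \<not> E z x1" using zx[OF X1(1)] by blast
        have z2: "z \<noteq> x2 \<and> \<not> E z x2" using zx[OF X1(2) r2] .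
        have z3: "z \<noteq> x3 \<and> \<not> E z x3" using zx[OF X1(3) r3] .
        have z4: "z \<noteq> x4 \<and> \<not> E z x4" using zx[OF X1(4) r4] .
        obtain yz where yz: "yz \<in> Y" "E z yz" using assms(11) z(1) by blast
        have nz: "\<not> E x yz" if "x \<in> X" "z \<noteq> x" "\<not> E z x" for x
          using NC[OF z(1) that(1) yz(1) that(2) that(3) yz(2)] .
        have w1: "\<not> E yz x1" using nz[OF X1(1)] z1 Es[of yz x1] by simp
        have w2: "\<not> E yz x2" using nz[OF X1(2)] z2 Es[of yz x2] by simp
        have w3: "\<not> E yz x3" using nz[OF X1(3)] z3 Es[of yz x3] by simp
        have w4: "\<not> E yz x4" using nz[OF X1(4)] z4 Es[of yz x4] by simp
        have zx1: "x1 \<noteq> z" using z1 by blast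
        have "\<not> E x1 z" using z1 Es[of x1 z] by simp
        then have zy1: "\<not> E z y1" using NC[OF X1(1) z(1) y1(1) zx1 _ y1(2)] by blast
        have "yz \<noteq> y1" using w1 y1(2) Es[of x1 y1] by auto
        then have yy: "E yz y1" using cl yz(1) y1(1) by blast
        have zV: "z \<in> V" using XV z(1) .
        have yzV: "yz \<in> V" using YV yz(1) .
        have zyz: "E z yz" using yz(2) .
        have all: "\<forall>x\<in>{x1,x2,x3,x4}. \<not> E z x \<and> \<not> E yz x"
          using z1 z2 z3 z4 w1 w2 w3 w4 by simp
        show False by (rule tail[OF zV yzV zyz yy zy1 all])
      next
        assume "\<exists>c' c''. c' \<in> V - (X \<union> Y) \<and> c'' \<in> V - (X \<union> Y) \<and>
            complete_to E {c'} Y \<and> anticomplete_to E {c'} X \<and>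
            anticomplete_to E {c''} (X \<union> Y) \<and> E c' c''"
        then obtain c' c'' where cc: "c' \<in> V" "c'' \<in> V" "complete_to E {c'} Y"
          "anticomplete_to E {c'} X" "anticomplete_to E {c''} (X \<union> Y)" "E c' c''" by blast
        show False
          apply (rule tail[of c'' c'])
          using cc y1 X1 Es unfolding complete_to_def anticomplete_to_def by auto
      qed
    qed
  next
    show "\<not> has_induced X E 6 twoP3_adj"
    proof
      assume "has_induced X E 6 twoP3_adj"
      then obtain p1 p2 p3 q1 q2 q3 where ps: "{p1,p2,p3,q1,q2,q3} \<subseteq> X"
        "E p1 p2" "E p2 p3" "\<not>E p1 p3" "E q1 q2" "E q2 q3" "\<not>E q1 q3"
        "\<forall>p\<in>{p1,p2,p3}. \<forall>q\<in>{q1,q2,q3}. \<not> E p q" "p1 \<noteq> p3" "q1 \<noteq> q3" by (rule get_2p3)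
      have side: "\<exists>y u v. y \<in> Y \<and> u \<in> {a1,a2,a3} \<and> v \<in> {a1,a2,a3} \<and> E y u \<and> E u v
          \<and> \<not> E y v \<and> (\<forall>q\<in>{b1,b2,b3}. \<not> E y q) \<and> E a1 y"
        if h: "{a1,a2,a3,b1,b2,b3} \<subseteq> X" "E a1 a2" "E a2 a3" "\<not>E a1 a3"
          "\<forall>p\<in>{a1,a2,a3}. \<forall>q\<in>{b1,b2,b3}. \<not> E p q" "a1 \<noteq> a3" for a1 a2 a3 b1 b2 b3
      proof -
        obtain y where y: "y \<in> Y" "E a1 y" using assms(11) h(1) by auto
        have A: "a1 \<in> X" "a3 \<in> X" "b1 \<in> X" "b2 \<in> X" "b3 \<in> X" using h(1) by auto
        have "a1 \<noteq> a3" using h(6) .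
        then have y3: "\<not> E a3 y" using NC[OF A(1) A(2) y(1) _ h(4) y(2)] by blast
        have nb: "\<not> E b y" if "b \<in> {b1,b2,b3}" for b
        proof -
          have bX: "b \<in> X" using that A by auto
          have "\<not> E a1 b" "\<not> E a2 b" using h(5) that by auto
          then have "a1 \<noteq> b" using h(2) Es[of a1 a2] by auto
          then show ?thesis using NC[OF A(1) bX y(1) _ \<open>\<not> E a1 b\<close> y(2)] by blast
        qed
        show ?thesis
        proof (cases "E a2 y")
          case True
          show ?thesis
            apply (rule exI[of _ y], rule exI[of _ a2], rule exI[of _ a3])
            using True y y3 nb[of b1] nb[of b2] nb[of b3] Es[of y b1] Es[of y b2] Es[of y b3] h(3) Es[of a2 y] Es[of a3 y] by simp
        next
          case False
          show ?thesis
            apply (rule exI[of _ y], rule exI[of _ a1], rule exI[of _ a2])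
            using False y nb[of b1] nb[of b2] nb[of b3] Es[of y b1] Es[of y b2] Es[of y b3] h(2) Es[of a1 y] Es[of a2 y] by simp
        qed
      qed
      obtain y u v where Y1: "y \<in> Y" "u \<in> {p1,p2,p3}" "v \<in> {p1,p2,p3}" "E y u" "E u v"
        "\<not> E y v" "\<forall>q\<in>{q1,q2,q3}. \<not> E y q" "E p1 y"
        using side[OF ps(1,2,3,4,8,9)] by blast
      have ps1: "{q1,q2,q3,p1,p2,p3} \<subseteq> X" using ps(1) by auto
      have ps8: "\<forall>p\<in>{q1,q2,q3}. \<forall>q\<in>{p1,p2,p3}. \<not> E p q" using ps(8) by (simp add: Es)
      obtain y' u' v' where Y2: "y' \<in> Y" "u' \<in> {q1,q2,q3}" "v' \<in> {q1,q2,q3}" "E y' u'" "E u' v'"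
        "\<not> E y' v'" "\<forall>q\<in>{p1,p2,p3}. \<not> E y' q" "E q1 y'"
        using side[OF ps1 ps(5,6,7) ps8 ps(10)] by blast
      have "y \<noteq> y'" using Y1(8) Y2(7) Es by auto
      then have yy: "E y y'" using cl Y1(1) Y2(1) by blast
      have uvX: "u \<in> X" "v \<in> X" "u' \<in> X" "v' \<in> X" using ps(1) Y1(2,3) Y2(2,3) by auto
      have cross: "\<And>a b. a \<in> {p1,p2,p3} \<Longrightarrow> b \<in> {q1,q2,q3} \<Longrightarrow> \<not> E a b" using ps(8) by blast
      have "has_induced V E 6 path_adj"
      proof (rule mk_p6[OF Es irr, where a="v" and b="u" and c="y" and d="y'" and e="u'" and g="v'"])
        show "{v, u, y, y', u', v'} \<subseteq> V" using uvX XV Y1(1) Y2(1) YV by auto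
        show "E v u" using Y1(5) Es[of u v] by simp
        show "E u y" using Y1(4) Es[of u y] by simp
        show "E y y'" by fact
        show "E y' u'" by fact
        show "E u' v'" by fact
        show "\<not> E v y" using Y1(6) Es[of v y] by simp
        show "\<not> E v y'" using Y2(7) Y1(3) by (auto simp: Es)
        show "\<not> E v u'" using cross[OF Y1(3) Y2(2)] .
        show "\<not> E v v'" using cross[OF Y1(3) Y2(3)] .
        show "\<not> E u y'" using Y2(7) Y1(2) by (auto simp: Es)
        show "\<not> E u u'" using cross[OF Y1(2) Y2(2)] .
        show "\<not> E u v'" using cross[OF Y1(2) Y2(3)] .
        show "\<not> E y u'" using Y1(7) Y2(2) by blast
        show "\<not> E y v'" using Y1(7) Y2(3) by blast
        show "\<not> E y' v'" by fact
      qed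
      then show False using assms(2) by blast
    qed
  qed
qed

end
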